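(* Let $\rho\in[-1,1]$ and $\kappa>(1+\rho)/\sqrt2$. Let $\bar Z\sim\mathcal N(0,1)$ and $\bar r$ be independent real random variables with $\bar r\ge0$, $\mathbb E[\bar r^2]<\infty$ and $\mathcal L(\bar r)\neq\delta_0$. Then the system $$\kappa=\delta+\rho\frac{\gamma}{\delta},\qquad \sigma^2=\frac1{\delta^2}\mathbb E\big[(\sigma\bar Z+\bar r)_+^2\big],\qquad \gamma=\mathbb P[\sigma\bar Z+\bar r>0]$$ admits a unique solution $(\delta,\sigma,\gamma)$ in $(1/\sqrt2,\infty)\times(0,\infty)\times(0,1)$.
   Context: $x_+=\max(x,0)$. *)

theory Defs
  imports "HOL-Probability.Probability"
begin

end

theory Submission
  imports Defs
begin


lemma alg_mono:
  fixes Da Db ha hb Na Nb ua ub \<rho> :: real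
  assumes Da: "Da > 0" and Db: "Db > 0" and e1: "Da\<^sup>2 = ha + ua * Na" and e2: "Db\<^sup>2 = hb + ub * Nb"
    and c1: "ha + ub * Na \<le> Db * Da" and c2: "hb + ua * Nb \<le> Da * Db"
    and hm: "ha \<le> hb" and ha: "0 \<le> ha" and Na: "Na > 0" and ua: "0 \<le> ua" and u12: "ua < ub"
    and r1: "-1 \<le> \<rho>" and r2: "\<rho> \<le> 1"
  shows "Da + \<rho> * ha / Da < Db + \<rho> * hb / Db"
proof -
  have "ua * Na < ub * Na" using Na u12 by simp
  then have "Da * Da < Db * Da" using e1 c1 by (simp add: power2_eq_square)
  then have D12: "Da < Db" using Da by simp
  have h1lt: "ha < Da * Db"
  proof -
    have "0 \<le> ua * Na" using ua Na by simp
    then have "ha \<le> Da * Da" using e1 by (simp add: power2_eq_square)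
    also have "Da * Da < Da * Db" using D12 Da by simp
    finally show ?thesis .
  qed
  show ?thesis
  proof (cases "\<rho> \<ge> 0")
    case True
    have "\<rho> * ha / Db \<le> \<rho> * hb / Db" using True hm Db by (intro divide_right_mono mult_left_mono) auto
    moreover have "Da + \<rho> * ha / Da < Db + \<rho> * ha / Db"
    proof -
      have "\<rho> * ha \<le> ha" using True r2 ha by (simp add: mult_left_le_one_le)
      then have "\<rho> * ha < Da * Db" using h1lt by linarith
      then have "(Db - Da) * (\<rho> * ha) < (Db - Da) * (Da * Db)" using D12 by (intro mult_strict_left_mono) auto
      then have "Da * (Da * Db) + \<rho> * ha * Db < Db * (Da * Db) + \<rho> * ha * Da"
        by (simp add: algebra_simps)
      then show ?thesis using Da Db by (simp add: field_simps)
    qed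
    ultimately show ?thesis by linarith
  next
    case False
    define ba where "ba = Na / Da"
    define bb where "bb = Nb / Db"
    have a1: "ha / Da = Da - ua * ba" using e1 Da by (simp add: ba_def field_simps power2_eq_square)
    have a2: "hb / Db = Db - ub * bb" using e2 Db by (simp add: bb_def field_simps power2_eq_square)
    have s1: "Db \<ge> ha / Da + ub * ba" using c1 Da by (simp add: ba_def field_simps)
    have s2: "Da \<ge> hb / Db + ua * bb" using c2 Db by (simp add: bb_def field_simps mult.commute)
    have "(ub - ua) * ba \<le> (ub - ua) * bb" using s1 s2 a1 a2 by (simp add: algebra_simps)
    then have b12: "ba \<le> bb" using u12 by simp
    have b1p: "ba > 0" using Na Da by (simp add: ba_def)
    have "ub * bb - ua * ba \<ge> (ub - ua) * ba"
      using b12 u12 ua by (simp add: algebra_simps mult_left_mono)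
    moreover have "(ub - ua) * ba > 0" using u12 b1p by simp
    ultimately have k: "ub * bb - ua * ba > 0" by linarith
    have "Da + \<rho> * ha / Da = (1 + \<rho>) * Da - \<rho> * (ua * ba)" unfolding times_divide_eq_right[symmetric] a1 by (simp add: algebra_simps)
    moreover have "Db + \<rho> * hb / Db = (1 + \<rho>) * Db - \<rho> * (ub * bb)" unfolding times_divide_eq_right[symmetric] a2 by (simp add: algebra_simps)
    moreover have "(1 + \<rho>) * Da \<le> (1 + \<rho>) * Db" using r1 D12 by (intro mult_left_mono) auto
    moreover have "- \<rho> * (ua * ba) < - \<rho> * (ub * bb)" using False k by (intro mult_strict_left_mono) auto
    ultimately show ?thesis by linarith
  qed
qed



lemma gauss_lim: "((\<lambda>z::real. (z + c) * exp (- z\<^sup>2 / 2)) \<longlongrightarrow> 0) at_top"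
proof (rule Lim_null_comparison)
  show "((\<lambda>z::real. 4 / z) \<longlongrightarrow> 0) at_top"
    by (rule tendsto_divide_0[OF tendsto_const filterlim_at_top_imp_at_infinity[OF filterlim_ident]])
  show "\<forall>\<^sub>F z in at_top. norm ((z + c) * exp (- z\<^sup>2 / 2)) \<le> 4 / z"
    using eventually_ge_at_top[of "max 1 \<bar>c\<bar>"]
  proof eventually_elim
    case (elim z)
    then have z1: "z \<ge> 1" and zc: "z \<ge> \<bar>c\<bar>" by auto
    have e: "exp (- z\<^sup>2 / 2) = 1 / exp (z\<^sup>2 / 2)" by (simp add: exp_minus field_simps)
    have ex: "1 + z\<^sup>2 / 2 \<le> exp (z\<^sup>2 / 2)" by (rule exp_ge_add_one_self)
    have "norm ((z + c) * exp (- z\<^sup>2 / 2)) = \<bar>z + c\<bar> / exp (z\<^sup>2 / 2)" unfolding e by (simp add: abs_mult)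
    also have "\<dots> \<le> (2 * z) / exp (z\<^sup>2 / 2)" using z1 zc by (intro divide_right_mono) auto
    also have "\<dots> \<le> (2 * z) / (1 + z\<^sup>2 / 2)" using z1 ex by (intro divide_left_mono) (auto simp: add_pos_nonneg)
    also have "\<dots> \<le> 4 / z" using z1 by (simp add: field_simps power2_eq_square add_pos_nonneg)
    finally show ?case .
  qed
qed



lemma std_dens_eq: "std_normal_density x = exp (- x\<^sup>2 / 2) / sqrt (2 * pi)"
  by (simp add: std_normal_density_def)

lemma dens_deriv_gen:
  "((\<lambda>x. K * exp (- x\<^sup>2 / 2)) has_real_derivative (- x * (K * exp (- x\<^sup>2 / 2)))) (at x)"
  by (auto intro!: derivative_eq_intros simp: algebra_simps)

lemma dens_deriv: "(std_normal_density has_real_derivative (- x * std_normal_density x)) (at x)"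
  using dens_deriv_gen[of "1 / sqrt (2 * pi)" x] unfolding std_normal_density_def[abs_def] by simp

lemma G1:
  fixes c :: real
  shows "(LBINT z=ereal (-c)..\<infinity>. std_normal_density z * (z\<^sup>2 + c * z - 1)) = 0"
proof -
  let ?F = "\<lambda>z::real. - (z + c) * std_normal_density z"
  have "(LBINT z=ereal (-c)..\<infinity>. std_normal_density z * (z\<^sup>2 + c * z - 1)) = 0 - 0"
  proof (rule interval_integral_FTC_integrable[where F = ?F])
    show "ereal (-c) < \<infinity>" by simp
    show "(?F has_vector_derivative std_normal_density x * (x\<^sup>2 + c * x - 1)) (at x)" for x
      unfolding has_real_derivative_iff_has_vector_derivative[symmetric]
      by (auto intro!: derivative_eq_intros dens_deriv simp: algebra_simps power2_eq_square)
    show "isCont (\<lambda>z. std_normal_density z * (z\<^sup>2 + c * z - 1)) x" for x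
      unfolding std_normal_density_def by (intro continuous_intros) auto
    show "set_integrable lborel (einterval (ereal (-c)) \<infinity>) (\<lambda>z. std_normal_density z * (z\<^sup>2 + c * z - 1))"
    proof -
      have i2: "integrable lborel (\<lambda>z. std_normal_density z * z^2)" by (rule integrable_std_normal_moment)
      have i1: "integrable lborel (\<lambda>z. c * (std_normal_density z * z^1))"
        by (rule integrable_mult_right, rule integrable_std_normal_moment)
      have i0: "integrable lborel (\<lambda>z. std_normal_density z)" by simp
      have "integrable lborel (\<lambda>z. std_normal_density z * z^2 + c * (std_normal_density z * z^1) - std_normal_density z)"
        by (rule Bochner_Integration.integrable_diff[OF Bochner_Integration.integrable_add[OF i2 i1] i0])
      then have "integrable lborel (\<lambda>z. std_normal_density z * (z\<^sup>2 + c * z - 1))"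
        by (simp add: algebra_simps)
      then show ?thesis unfolding set_integrable_def
        by (intro integrable_mult_indicator) auto
    qed
    show "((?F \<circ> real_of_ereal) \<longlongrightarrow> 0) (at_right (ereal (-c)))"
    proof -
      have "isCont ?F (-c)" unfolding std_normal_density_def by (intro continuous_intros) auto
      then have "(?F \<longlongrightarrow> ?F (-c)) (at (-c))" by (simp add: isCont_def)
      then have "(?F \<longlongrightarrow> 0) (at_right (-c))"
        by (auto intro: tendsto_mono[OF at_le])
      then show ?thesis unfolding ereal_tendsto_simps1 by simp
    qed
    show "((?F \<circ> real_of_ereal) \<longlongrightarrow> 0) (at_left \<infinity>)"
    proof -
      have eq: "?F = (\<lambda>z. - ((z + c) * exp (- z\<^sup>2 / 2)) / sqrt (2 * pi))"
        by (auto simp: std_dens_eq fun_eq_iff algebra_simps)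
      have "((\<lambda>z. - ((z + c) * exp (- z\<^sup>2 / 2)) / sqrt (2 * pi)) \<longlongrightarrow> - 0 / sqrt (2 * pi)) at_top"
        by (intro tendsto_divide tendsto_minus gauss_lim tendsto_const) auto
      then show ?thesis unfolding ereal_tendsto_simps1 eq by simp
    qed
  qed
  then show ?thesis by simp
qed

lemma int_phi_poly:
  "integrable lborel (\<lambda>z. std_normal_density z * (a * z\<^sup>2 + b * z + d))"
proof -
  have i2: "integrable lborel (\<lambda>z. a * (std_normal_density z * z^2))"
    by (rule integrable_mult_right, rule integrable_std_normal_moment)
  have i1: "integrable lborel (\<lambda>z. b * (std_normal_density z * z^1))"
    by (rule integrable_mult_right, rule integrable_std_normal_moment)
  have i0: "integrable lborel (\<lambda>z. d * std_normal_density z)" by simp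
  have "integrable lborel (\<lambda>z. a * (std_normal_density z * z^2) + b * (std_normal_density z * z^1) + d * std_normal_density z)"
    by (rule Bochner_Integration.integrable_add[OF Bochner_Integration.integrable_add[OF i2 i1] i0])
  then show ?thesis by (simp add: algebra_simps)
qed

lemma G1':
  fixes c :: real
  shows "(\<integral>z. std_normal_density z * (z * max (z + c) 0) \<partial>lborel) =
         (\<integral>z. std_normal_density z * indicator {-c<..} z \<partial>lborel)"
proof -
  have e: "einterval (ereal (-c)) \<infinity> = {-c<..}" by (auto simp: einterval_def)
  have "(\<integral>z. indicator {-c<..} z *\<^sub>R (std_normal_density z * (z\<^sup>2 + c * z - 1)) \<partial>lborel) = 0"
    using G1[of c] by (simp add: interval_lebesgue_integral_def set_lebesgue_integral_def e)
  moreover have "(\<lambda>z. indicator {-c<..} z *\<^sub>R (std_normal_density z * (z\<^sup>2 + c * z - 1))) =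
     (\<lambda>z. indicator {-c<..} z *\<^sub>R (std_normal_density z * (1 * z\<^sup>2 + c * z + 0)) - std_normal_density z * indicator {-c<..} z)"
    by (auto simp: algebra_simps split: split_indicator)
  moreover have "(\<lambda>z. std_normal_density z * (z * max (z + c) 0)) = 
     (\<lambda>z. indicator {-c<..} z *\<^sub>R (std_normal_density z * (1 * z\<^sup>2 + c * z + 0)))"
    by (auto simp: algebra_simps power2_eq_square max_def split: split_indicator)
  moreover have "integrable lborel (\<lambda>z. indicator {-c<..} z *\<^sub>R (std_normal_density z * (1 * z\<^sup>2 + c * z + 0)))"
    by (intro integrable_mult_indicator int_phi_poly) auto
  moreover have "integrable lborel (\<lambda>z. std_normal_density z * indicator {-c<..} z)"
    by (intro integrable_real_mult_indicator) auto
  ultimately show ?thesis by simp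
qed

lemma G3:
  fixes c :: real
  shows "(\<integral>z. std_normal_density z * indicator {-c<..} z \<partial>lborel) < 1"
proof -
  let ?m = "std_normal_density (\<bar>c\<bar> + 1)"
  have m: "?m > 0" by (simp add: normal_density_pos)
  have le: "?m * indicator {-c-1..-c} z \<le> std_normal_density z * indicator {..-c} z" for z
  proof (cases "z \<in> {-c-1..-c}")
    case True
    then have "z\<^sup>2 \<le> (\<bar>c\<bar> + 1)\<^sup>2"
      by (auto simp: abs_le_iff power2_le_iff_abs_le)
    then have "?m \<le> std_normal_density z"
      unfolding std_normal_density_def by (intro mult_left_mono) auto
    then show ?thesis using True by auto
  qed auto
  have "(\<integral>z. ?m * indicator {-c-1..-c} z \<partial>lborel) \<le> (\<integral>z. std_normal_density z * indicator {..-c} z \<partial>lborel)"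
  proof (rule integral_mono[OF _ _ le])
    show "integrable lborel (\<lambda>z. ?m * indicator {-c-1..-c} z)"
      by (intro integrable_mult_right integrable_real_indicator) auto
  qed (intro integrable_real_mult_indicator, auto)
  moreover have "(\<integral>z. ?m * indicator {-c-1..-c} z \<partial>lborel) = ?m" by simp
  moreover have "(\<integral>z. std_normal_density z * indicator {-c<..} z \<partial>lborel) + (\<integral>z. std_normal_density z * indicator {..-c} z \<partial>lborel) = 1"
  proof -
    have "(\<integral>z. std_normal_density z * indicator {-c<..} z \<partial>lborel) + (\<integral>z. std_normal_density z * indicator {..-c} z \<partial>lborel)
       = (\<integral>z. std_normal_density z * indicator {-c<..} z + std_normal_density z * indicator {..-c} z \<partial>lborel)"
      by (intro Bochner_Integration.integral_add[symmetric] integrable_real_mult_indicator) auto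
    also have "\<dots> = (\<integral>z. std_normal_density z \<partial>lborel)"
      by (intro Bochner_Integration.integral_cong) (auto split: split_indicator)
    finally show ?thesis by simp
  qed
  ultimately show ?thesis using m by linarith
qed

lemma G2half: "(\<integral>z. std_normal_density z * indicator {0<..} z \<partial>lborel) = 1 / 2"
proof -
  have refl: "(\<integral>z. std_normal_density z * indicator {0<..} z \<partial>lborel) = (\<integral>z. std_normal_density z * indicator {..<0} z \<partial>lborel)"
    by (subst lborel_integral_real_affine[where c="-1" and t=0])
       (auto intro!: Bochner_Integration.integral_cong simp: std_normal_density_def split: split_indicator)
  have "(\<integral>z. std_normal_density z * indicator {0<..} z \<partial>lborel) + (\<integral>z. std_normal_density z * indicator {..<0} z \<partial>lborel)
       = (\<integral>z. std_normal_density z * indicator {0<..} z + std_normal_density z * indicator {..<0} z \<partial>lborel)"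
    by (intro Bochner_Integration.integral_add[symmetric] integrable_real_mult_indicator) auto
  also have "\<dots> = (\<integral>z. std_normal_density z \<partial>lborel)"
    by (intro integral_cong_AE) (auto intro!: eventually_mono[OF AE_lborel_singleton[of 0]] split: split_indicator)
  finally show ?thesis using refl by simp
qed

lemma G2: "(\<integral>z. std_normal_density z * (max z 0)\<^sup>2 \<partial>lborel) = 1 / 2"
proof -
  have "(\<lambda>z. std_normal_density z * (max z 0)\<^sup>2) = (\<lambda>z. std_normal_density z * (z * max (z + 0) 0))"
    by (auto simp: max_def power2_eq_square)
  then show ?thesis using G1'[of 0] G2half by simp
qed

lemma G4: "(\<integral>z. std_normal_density z * max z 0 \<partial>lborel) > 0"
proof -
  let ?m = "std_normal_density 2"
  have m: "?m > 0" by (simp add: normal_density_pos)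
  have le: "?m * indicator {1..2} z \<le> std_normal_density z * max z 0" for z
  proof (cases "z \<in> {1..2}")
    case True
    then have "z\<^sup>2 \<le> 2\<^sup>2" by (intro power_mono) auto
    then have "?m \<le> std_normal_density z"
      unfolding std_normal_density_def by (intro mult_left_mono) auto
    moreover have "std_normal_density z * 1 \<le> std_normal_density z * z"
      using True by (intro mult_left_mono) auto
    ultimately show ?thesis using True by (simp add: max_def)
  qed (auto simp: max_def)
  have "(\<integral>z. ?m * indicator {1..2::real} z \<partial>lborel) \<le> (\<integral>z. std_normal_density z * max z 0 \<partial>lborel)"
  proof (rule integral_mono[OF _ _ le])
    show "integrable lborel (\<lambda>z. ?m * indicator {1..2::real} z)"
      by (intro integrable_mult_right integrable_real_indicator) auto
    have "integrable lborel (\<lambda>z. indicator {0<..} z *\<^sub>R (std_normal_density z * z^1))"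
      by (intro integrable_mult_indicator integrable_std_normal_moment) auto
    moreover have "(\<lambda>z. indicator {0<..} z *\<^sub>R (std_normal_density z * z^1)) = (\<lambda>z. std_normal_density z * max z 0)"
      by (auto simp: max_def split: split_indicator)
    ultimately show "integrable lborel (\<lambda>z. std_normal_density z * max z 0)" by simp
  qed
  moreover have "(\<integral>z. ?m * indicator {1..2::real} z \<partial>lborel) = ?m" by simp
  ultimately show ?thesis using m by linarith
qed



lemma cont_int:
  fixes F :: "real \<Rightarrow> 'a \<Rightarrow> real"
  assumes m: "\<And>t. F t \<in> borel_measurable M" and c: "\<And>x. continuous_on {a..b} (\<lambda>t. F t x)"
    and bd: "\<And>t x. t \<in> {a..b} \<Longrightarrow> \<bar>F t x\<bar> \<le> w x" and w: "integrable M w"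
  shows "continuous_on {a..b} (\<lambda>t. \<integral>x. F t x \<partial>M)"
proof (rule continuous_on_sequentiallyI)
  fix u l assume u: "\<forall>n. u n \<in> {a..b}" and l: "l \<in> {a..b}" and ul: "u \<longlonglongrightarrow> l"
  show "(\<lambda>n. \<integral>x. F (u n) x \<partial>M) \<longlonglongrightarrow> (\<integral>x. F l x \<partial>M)"
  proof (rule integral_dominated_convergence[where w=w])
    show "AE x in M. (\<lambda>n. F (u n) x) \<longlonglongrightarrow> F l x"
    proof (rule AE_I2)
      fix x show "(\<lambda>n. F (u n) x) \<longlonglongrightarrow> F l x"
        using c[of x] u l ul unfolding continuous_on_sequentially comp_def by blast
    qed
    show "AE x in M. norm (F (u n) x) \<le> w x" for n using bd u by auto
  qed (use m w in auto)
qed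


locale L = prob_space M for M :: "'a measure" +
  fixes Z r :: "'a \<Rightarrow> real"
  assumes Zd: "distributed M lborel Z (\<lambda>x. ennreal (std_normal_density x))"
    and rm[measurable]: "r \<in> borel_measurable M"
    and ind: "indep_var borel Z borel r"
    and rpos: "AE x in M. r x \<ge> 0"
    and r2: "integrable M (\<lambda>x. (r x)\<^sup>2)"
    and rnz: "distr M borel r \<noteq> return borel 0"
begin

abbreviation "Nz \<equiv> density lborel (\<lambda>x. ennreal (std_normal_density x))"
abbreviation "P \<equiv> distr M borel r"

lemma Zm[measurable]: "Z \<in> borel_measurable M"
  using distributed_measurable[OF Zd] by simp

lemma distZ: "distr M borel Z = Nz"
proof -
  have "distr M borel Z = distr M lborel Z" by (rule distr_cong) auto
  also have "\<dots> = Nz" using distributed_distr_eq_density[OF Zd] .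
  finally show ?thesis .
qed

lemma pair_eq: "Nz \<Otimes>\<^sub>M P = distr M (borel \<Otimes>\<^sub>M borel) (\<lambda>x. (Z x, r x))"
  using ind unfolding indep_var_distribution_eq distZ by simp

lemma probNz: "prob_space Nz" using prob_space_normal_density by simp
lemma probP: "prob_space P" by (rule prob_space_distr) simp

lemma bridge:
  fixes f :: "real \<Rightarrow> real \<Rightarrow> real"
  assumes fm[measurable]: "(\<lambda>p. f (fst p) (snd p)) \<in> borel_measurable (borel \<Otimes>\<^sub>M borel)"
    and fi: "integrable M (\<lambda>x. f (Z x) (r x))"
  shows "(\<integral>x. f (Z x) (r x) \<partial>M) = (\<integral>s. (\<integral>z. std_normal_density z * f z s \<partial>lborel) \<partial>P)"
proof -
  interpret Nz: prob_space Nz by (rule probNz)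
  interpret Pp: prob_space P by (rule probP)
  interpret pair_sigma_finite Nz P ..
  have pm: "(\<lambda>x. (Z x, r x)) \<in> measurable M (borel \<Otimes>\<^sub>M borel)" by measurable
  have cp: "case_prod f = (\<lambda>p. f (fst p) (snd p))" by (auto simp: fun_eq_iff)
  have "(\<integral>x. f (Z x) (r x) \<partial>M) = (\<integral>p. case_prod f p \<partial>distr M (borel \<Otimes>\<^sub>M borel) (\<lambda>x. (Z x, r x)))"
    by (subst integral_distr[OF pm]) (auto simp: cp)
  also have "\<dots> = (\<integral>p. case_prod f p \<partial>(Nz \<Otimes>\<^sub>M P))" by (simp add: pair_eq)
  finally have e1: "(\<integral>x. f (Z x) (r x) \<partial>M) = (\<integral>p. case_prod f p \<partial>(Nz \<Otimes>\<^sub>M P))" .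
  have int: "integrable (Nz \<Otimes>\<^sub>M P) (case_prod f)"
    unfolding pair_eq using fi by (subst integrable_distr_eq[OF pm]) (auto simp: cp)
  have "(\<integral>s. (\<integral>z. f z s \<partial>Nz) \<partial>P) = (\<integral>z. (\<integral>s. f z s \<partial>P) \<partial>Nz)"
    by (rule Fubini_integral[OF int])
  also have "\<dots> = (\<integral>p. case_prod f p \<partial>(Nz \<Otimes>\<^sub>M P))"
    using integral_fst'[OF int] by simp
  finally have e2: "(\<integral>s. (\<integral>z. f z s \<partial>Nz) \<partial>P) = (\<integral>p. case_prod f p \<partial>(Nz \<Otimes>\<^sub>M P))" .
  have e3: "(\<integral>z. f z s \<partial>Nz) = (\<integral>z. std_normal_density z * f z s \<partial>lborel)" for s
  proof -
    have "(\<lambda>z. (z, s)) \<in> measurable borel (borel \<Otimes>\<^sub>M borel)" by measurable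
    from measurable_compose[OF this fm] have "(\<lambda>z. f z s) \<in> borel_measurable borel" by simp
    then show ?thesis by (subst integral_density) auto
  qed
  show ?thesis using e1 e2 e3 by simp
qed

definition W :: "real \<Rightarrow> 'a \<Rightarrow> real" where "W u x = Z x + u * r x"
definition hh :: "real \<Rightarrow> real" where "hh u = measure M {x \<in> space M. W u x > 0}"
definition g :: "real \<Rightarrow> real" where "g u = (\<integral>x. (max (W u x) 0)\<^sup>2 \<partial>M)"
definition Nn :: "real \<Rightarrow> real" where "Nn u = (\<integral>x. r x * max (W u x) 0 \<partial>M)"
definition S :: "real \<Rightarrow> real" where "S u = (\<integral>x. Z x * max (W u x) 0 \<partial>M)"

lemma Wm[measurable]: "W u \<in> borel_measurable M" unfolding W_def by measurable

lemma iZ2: "integrable M (\<lambda>x. (Z x)\<^sup>2)"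
  using distributed_integrable[OF Zd, of "\<lambda>x. x^2"] integrable_std_normal_moment[of 2] by simp

definition B :: "'a \<Rightarrow> real" where "B x = (Z x)\<^sup>2 + (r x)\<^sup>2 + 1"

lemma B_ge1: "B x \<ge> 1" unfolding B_def by (simp add: add_nonneg_nonneg)

lemma iB: "integrable M B" unfolding B_def
  by (intro Bochner_Integration.integrable_add iZ2 r2) simp

lemma intB:
  assumes [measurable]: "f \<in> borel_measurable M" and b: "\<And>x. \<bar>f x\<bar> \<le> C * B x"
  shows "integrable M f"
proof (rule Bochner_Integration.integrable_bound[of M "\<lambda>x. C * B x"])
  show "integrable M (\<lambda>x. C * B x)" using iB by simp
  have "B x \<ge> 0" for x unfolding B_def by (simp add: add_nonneg_nonneg)
  then show "AE x in M. norm (f x) \<le> norm (C * B x)"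
    using b by (auto intro!: AE_I2 order.trans[OF b abs_ge_self])
qed simp

lemma sq_bound: "\<bar>a * b\<bar> \<le> a\<^sup>2 + b\<^sup>2" for a b :: real
proof -
  have "0 \<le> (\<bar>a\<bar> - \<bar>b\<bar>)\<^sup>2" by simp
  then have "2 * (\<bar>a\<bar> * \<bar>b\<bar>) \<le> a\<^sup>2 + b\<^sup>2" by (simp add: power2_eq_square algebra_simps)
  moreover have "0 \<le> \<bar>a\<bar> * \<bar>b\<bar>" by simp
  ultimately show ?thesis unfolding abs_mult by linarith
qed

lemma maxW_bound: "\<bar>max (a + u * b) 0\<bar> \<le> \<bar>a\<bar> + \<bar>u\<bar> * \<bar>b\<bar>" for a b u :: real
proof -
  have "\<bar>max (a + u * b) 0\<bar> \<le> \<bar>a + u * b\<bar>" by (simp add: max_def)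
  also have "\<dots> \<le> \<bar>a\<bar> + \<bar>u * b\<bar>" by (rule abs_triangle_ineq)
  finally show ?thesis by (simp add: abs_mult)
qed

lemma bnd1: "\<bar>a * max (a + u * b) 0\<bar> \<le> (1 + \<bar>u\<bar>) * (a\<^sup>2 + b\<^sup>2 + 1)" for a b u :: real
proof -
  have "\<bar>a * max (a + u * b) 0\<bar> \<le> \<bar>a\<bar> * (\<bar>a\<bar> + \<bar>u\<bar> * \<bar>b\<bar>)"
    unfolding abs_mult by (intro mult_left_mono maxW_bound) auto
  also have "\<dots> = a\<^sup>2 + \<bar>u\<bar> * \<bar>a * b\<bar>" by (simp add: algebra_simps power2_eq_square abs_mult)
  also have "\<dots> \<le> a\<^sup>2 + \<bar>u\<bar> * (a\<^sup>2 + b\<^sup>2)" by (intro add_left_mono mult_left_mono sq_bound) auto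
  also have "\<dots> \<le> (1 + \<bar>u\<bar>) * (a\<^sup>2 + b\<^sup>2 + 1)" by (simp add: algebra_simps)
  finally show ?thesis .
qed

lemma bnd2: "\<bar>b * max (a + u * b) 0\<bar> \<le> (1 + \<bar>u\<bar>) * (a\<^sup>2 + b\<^sup>2 + 1)" for a b u :: real
proof -
  have "\<bar>b * max (a + u * b) 0\<bar> \<le> \<bar>b\<bar> * (\<bar>a\<bar> + \<bar>u\<bar> * \<bar>b\<bar>)"
    unfolding abs_mult by (intro mult_left_mono maxW_bound) auto
  also have "\<dots> = \<bar>a * b\<bar> + \<bar>u\<bar> * b\<^sup>2" by (simp add: algebra_simps power2_eq_square abs_mult)
  also have "\<dots> \<le> (a\<^sup>2 + b\<^sup>2) + \<bar>u\<bar> * b\<^sup>2" by (intro add_right_mono sq_bound)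
  also have "\<dots> \<le> (1 + \<bar>u\<bar>) * (a\<^sup>2 + b\<^sup>2 + 1)" by (simp add: algebra_simps)
  finally show ?thesis .
qed

lemma bnd3: "(max (a + u * b) 0)\<^sup>2 \<le> (2 + 2 * u\<^sup>2) * (a\<^sup>2 + b\<^sup>2 + 1)" for a b u :: real
proof -
  have "(max (a + u * b) 0)\<^sup>2 = \<bar>max (a + u * b) 0\<bar>\<^sup>2" by simp
  also have "\<dots> \<le> (\<bar>a\<bar> + \<bar>u\<bar> * \<bar>b\<bar>)\<^sup>2" by (intro power_mono maxW_bound) auto
  also have "\<dots> \<le> 2 * a\<^sup>2 + 2 * (u\<^sup>2 * b\<^sup>2)"
  proof -
    have "0 \<le> (\<bar>a\<bar> - \<bar>u\<bar> * \<bar>b\<bar>)\<^sup>2" by simp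
    then show ?thesis by (simp add: power2_eq_square algebra_simps abs_mult)
  qed
  also have "\<dots> \<le> (2 + 2 * u\<^sup>2) * (a\<^sup>2 + b\<^sup>2 + 1)" by (simp add: algebra_simps)
  finally show ?thesis .
qed

lemma iS: "integrable M (\<lambda>x. Z x * max (W u x) 0)"
  by (rule intB[where C="1 + \<bar>u\<bar>"]) (auto simp: W_def B_def intro: bnd1)
lemma iN: "integrable M (\<lambda>x. r x * max (W u x) 0)"
  by (rule intB[where C="1 + \<bar>u\<bar>"]) (auto simp: W_def B_def intro: bnd2)
lemma ig: "integrable M (\<lambda>x. (max (W u x) 0)\<^sup>2)"
  by (rule intB[where C="2 + 2 * u\<^sup>2"]) (simp_all add: W_def B_def bnd3)

lemma Stein: "hh u = S u"
proof -
  have "S u = (\<integral>s. (\<integral>z. std_normal_density z * (z * max (z + u * s) 0) \<partial>lborel) \<partial>P)"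
    unfolding S_def W_def by (rule bridge[where f="\<lambda>z s. z * max (z + u * s) 0"]) (use iS in \<open>auto simp: W_def\<close>)
  also have "\<dots> = (\<integral>s. (\<integral>z. std_normal_density z * indicator (greaterThan (- (u * s))) z \<partial>lborel) \<partial>P)"
    using G1' by simp
  also have "\<dots> = (\<integral>s. (\<integral>z. std_normal_density z * (if z + u * s > 0 then 1 else 0) \<partial>lborel) \<partial>P)"
    by (intro Bochner_Integration.integral_cong refl) (auto split: split_indicator)
  also have "\<dots> = (\<integral>x. (if Z x + u * r x > 0 then 1 else 0) \<partial>M)"
  proof (rule bridge[where f="\<lambda>z s. if z + u * s > 0 then 1 else 0", symmetric])
    show "integrable M (\<lambda>x. if Z x + u * r x > 0 then 1 else (0::real))"
      by (intro integrable_const_bound[where B=1]) auto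
  qed auto
  also have "\<dots> = (\<integral>x. indicator {x \<in> space M. W u x > 0} x \<partial>M)"
    by (intro Bochner_Integration.integral_cong refl) (auto simp: W_def split: split_indicator)
  also have "\<dots> = hh u" unfolding hh_def by (simp add: Int_absorb2)
  finally show ?thesis by simp
qed

lemma abs_sq1: "\<bar>a\<bar> \<le> a\<^sup>2 + b\<^sup>2 + 1" for a b :: real
proof -
  have "0 \<le> (\<bar>a\<bar> - 1)\<^sup>2" by simp
  then have "2 * \<bar>a\<bar> \<le> a\<^sup>2 + 1" by (simp add: power2_eq_square algebra_simps)
  moreover have "0 \<le> b\<^sup>2" "0 \<le> \<bar>a\<bar>" by simp_all
  ultimately show ?thesis by linarith
qed

lemma ir: "integrable M r"
proof (rule intB[where C="1::real"])
  fix x have "\<bar>r x\<bar> \<le> (r x)\<^sup>2 + (Z x)\<^sup>2 + 1" by (rule abs_sq1)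
  then show "\<bar>r x\<bar> \<le> 1 * B x" unfolding B_def by simp
qed simp

lemma Er_pos: "(\<integral>x. r x \<partial>M) > 0"
proof (rule ccontr)
  assume "\<not> ?thesis"
  moreover have "(\<integral>x. r x \<partial>M) \<ge> 0" using rpos by (intro integral_nonneg_AE) auto
  ultimately have "(\<integral>x. r x \<partial>M) = 0" by simp
  then have ae: "AE x in M. r x = 0" using integral_nonneg_eq_0_iff_AE[OF ir rpos] by simp
  have "distr M borel r = return borel 0"
  proof (rule measure_eqI)
    show "sets (distr M borel r) = sets (return borel 0)" by simp
    fix A assume A: "A \<in> sets (distr M borel r)"
    then have A': "A \<in> sets borel" by simp
    have "emeasure (distr M borel r) A = emeasure M (r -` A \<inter> space M)"
      using A' by (intro emeasure_distr) auto
    also have "\<dots> = emeasure M (if (0::real) \<in> A then space M else {})"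
      by (rule emeasure_eq_AE) (use ae A' in auto)
    also have "\<dots> = emeasure (return borel 0) A"
      using A' by (auto simp: emeasure_space_1)
    finally show "emeasure (distr M borel r) A = emeasure (return borel 0) A" .
  qed
  with rnz show False by simp
qed

lemma iZp: "integrable M (\<lambda>x. max (Z x) 0)"
proof (rule intB[where C="1::real"])
  fix x have "\<bar>max (Z x) 0\<bar> \<le> \<bar>Z x\<bar>" by (simp add: max_def)
  also have "\<dots> \<le> B x" using abs_sq1 unfolding B_def by blast
  finally show "\<bar>max (Z x) 0\<bar> \<le> 1 * B x" by simp
qed simp

lemma EZp_pos: "(\<integral>x. max (Z x) 0 \<partial>M) > 0"
  using distributed_integral[OF Zd, of "\<lambda>z. max z 0"] G4 by simp

lemma Nn0_pos: "Nn 0 > 0"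
proof -
  have i: "indep_var borel ((\<lambda>z. max z 0) \<circ> Z) borel (id \<circ> r)"
    by (rule indep_var_compose[OF ind]) auto
  have "Nn 0 = (\<integral>x. max (Z x) 0 * r x \<partial>M)" unfolding Nn_def W_def by (simp add: mult.commute)
  also have "\<dots> = (\<integral>x. max (Z x) 0 \<partial>M) * (\<integral>x. r x \<partial>M)"
    using indep_var_lebesgue_integral[OF i] iZp ir by (simp add: comp_def)
  finally show ?thesis using EZp_pos Er_pos by simp
qed

definition Gs :: "real \<Rightarrow> real \<Rightarrow> real" where
  "Gs u s = (\<integral>z. std_normal_density z * (if - (u * s) < z then 1 else 0) \<partial>lborel)"

lemma Gs_eq: "Gs u s = (\<integral>z. std_normal_density z * indicator (greaterThan (- (u * s))) z \<partial>lborel)"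
  unfolding Gs_def by (intro Bochner_Integration.integral_cong refl) (auto split: split_indicator)

lemma hh_P: "hh u = (\<integral>s. Gs u s \<partial>P)"
proof -
  have "(\<integral>s. Gs u s \<partial>P) = (\<integral>s. (\<integral>z. std_normal_density z * (if z + u * s > 0 then 1 else 0) \<partial>lborel) \<partial>P)"
    unfolding Gs_def by (intro Bochner_Integration.integral_cong refl) (auto intro!: Bochner_Integration.integral_cong)
  also have "\<dots> = (\<integral>x. (if Z x + u * r x > 0 then 1 else 0) \<partial>M)"
  proof (rule bridge[where f="\<lambda>z s. if z + u * s > 0 then 1 else 0", symmetric])
    show "integrable M (\<lambda>x. if Z x + u * r x > 0 then 1 else (0::real))"
      by (intro integrable_const_bound[where B=1]) auto
  qed auto
  also have "\<dots> = (\<integral>x. indicator {x \<in> space M. W u x > 0} x \<partial>M)"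
    by (intro Bochner_Integration.integral_cong refl) (auto simp: W_def split: split_indicator)
  also have "\<dots> = hh u" unfolding hh_def by (simp add: Int_absorb2)
  finally show ?thesis by simp
qed

lemma Gs_lt1: "Gs u s < 1" using G3[of "u * s"] by (simp add: Gs_eq)
lemma Gs_ge0: "Gs u s \<ge> 0" unfolding Gs_def by (intro Bochner_Integration.integral_nonneg) auto

lemma hh_lt1: "hh u < 1"
proof -
  interpret Pp: prob_space P by (rule probP)
  have Gm[measurable]: "Gs u \<in> borel_measurable borel" unfolding Gs_def[abs_def] by measurable
  have iG: "integrable P (Gs u)"
    by (intro Pp.integrable_const_bound[where B=1]) (auto simp: Gs_ge0 less_imp_le[OF Gs_lt1])
  have "(\<integral>s. 1 - Gs u s \<partial>P) > 0"
  proof (rule ccontr)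
    assume "\<not> ?thesis"
    moreover have "(\<integral>s. 1 - Gs u s \<partial>P) \<ge> 0" by (intro Bochner_Integration.integral_nonneg) (simp add: less_imp_le[OF Gs_lt1])
    ultimately have "(\<integral>s. 1 - Gs u s \<partial>P) = 0" by simp
    moreover have "integrable P (\<lambda>s. 1 - Gs u s)" using iG by simp
    ultimately have "AE s in P. 1 - Gs u s = 0"
      using integral_nonneg_eq_0_iff_AE[of P "\<lambda>s. 1 - Gs u s"] by (simp add: less_imp_le[OF Gs_lt1])
    then have "AE s in P. False" by eventually_elim (use Gs_lt1[of u] in \<open>auto simp: less_le\<close>)
    then show False using Pp.AE_False by simp
  qed
  moreover have "measure P UNIV = 1" using Pp.prob_space by simp
  ultimately have "(\<integral>s. Gs u s \<partial>P) < 1" using iG by simp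
  then show ?thesis using hh_P by simp
qed

lemma gdecomp: "g u = hh u + u * Nn u"
proof -
  have "g u = (\<integral>x. Z x * max (W u x) 0 + u * (r x * max (W u x) 0) \<partial>M)"
    unfolding g_def by (intro Bochner_Integration.integral_cong refl) (auto simp: W_def max_def power2_eq_square algebra_simps)
  also have "\<dots> = S u + u * Nn u"
    unfolding S_def Nn_def using iS iN by simp
  finally show ?thesis using Stein by simp
qed

lemma g0: "g 0 = 1 / 2"
  unfolding g_def W_def using distributed_integral[OF Zd, of "\<lambda>z. (max z 0)\<^sup>2"] G2 by simp

lemma h0: "hh 0 = 1 / 2" using gdecomp[of 0] g0 by simp

lemma hh_mono: assumes "0 \<le> u" "u \<le> v" shows "hh u \<le> hh v"
  unfolding hh_def
proof (rule finite_measure_mono_AE)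
  show "AE x in M. x \<in> {x \<in> space M. 0 < W u x} \<longrightarrow> x \<in> {x \<in> space M. 0 < W v x}"
    using rpos
  proof eventually_elim
    case (elim x)
    have "u * r x \<le> v * r x" using assms elim by (intro mult_right_mono) auto
    then show ?case by (auto simp: W_def)
  qed
qed measurable

lemma Nn_mono: assumes "0 \<le> u" "u \<le> v" shows "Nn u \<le> Nn v"
  unfolding Nn_def
proof (rule integral_mono_AE[OF iN iN])
  show "AE x in M. r x * max (W u x) 0 \<le> r x * max (W v x) 0"
    using rpos
  proof eventually_elim
    case (elim x)
    have "u * r x \<le> v * r x" using assms elim by (intro mult_right_mono) auto
    then have "max (W u x) 0 \<le> max (W v x) 0" by (auto simp: W_def)
    then show ?case using elim by (intro mult_left_mono) auto
  qed
qed

lemma Nn_pos: "0 \<le> u \<Longrightarrow> Nn u > 0" using Nn_mono[of 0 u] Nn0_pos by simp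

lemma g_ge: "0 \<le> u \<Longrightarrow> g u \<ge> 1 / 2 + u * Nn 0"
  using gdecomp[of u] hh_mono[of 0 u] h0 Nn_mono[of 0 u] by (simp add: mult_left_mono add_mono)

lemma g_pos: assumes "0 \<le> u" shows "g u > 0"
proof -
  have "0 \<le> u * Nn 0" using assms Nn0_pos by simp
  then show ?thesis using g_ge[OF assms] by linarith
qed

lemma amgm: "x * y \<le> (b / (2 * a)) * x\<^sup>2 + (a / (2 * b)) * y\<^sup>2" if "a > 0" "b > 0" for x y a b :: real
proof -
  have "0 \<le> (b * x - a * y)\<^sup>2" by simp
  then have "2 * a * b * (x * y) \<le> b\<^sup>2 * x\<^sup>2 + a\<^sup>2 * y\<^sup>2" by (simp add: power2_eq_square algebra_simps)
  then have "x * y \<le> (b\<^sup>2 * x\<^sup>2 + a\<^sup>2 * y\<^sup>2) / (2 * a * b)" using that by (simp add: field_simps)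
  also have "\<dots> = (b / (2 * a)) * x\<^sup>2 + (a / (2 * b)) * y\<^sup>2" using that by (simp add: field_simps power2_eq_square)
  finally show ?thesis .
qed

lemma CS: assumes "0 \<le> u" "0 \<le> v" shows "hh u + v * Nn u \<le> sqrt (g v) * sqrt (g u)"
proof -
  define a where "a = sqrt (g v)"
  define b where "b = sqrt (g u)"
  have a: "a > 0" and b: "b > 0" using g_pos assms by (auto simp: a_def b_def)
  have "hh u + v * Nn u = (\<integral>x. Z x * max (W u x) 0 + v * (r x * max (W u x) 0) \<partial>M)"
    unfolding Stein S_def Nn_def using iS iN by simp
  also have "\<dots> \<le> (\<integral>x. (b / (2 * a)) * (max (W v x) 0)\<^sup>2 + (a / (2 * b)) * (max (W u x) 0)\<^sup>2 \<partial>M)"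
  proof (rule integral_mono)
    show "integrable M (\<lambda>x. Z x * max (W u x) 0 + v * (r x * max (W u x) 0))" using iS iN by simp
    show "integrable M (\<lambda>x. (b / (2 * a)) * (max (W v x) 0)\<^sup>2 + (a / (2 * b)) * (max (W u x) 0)\<^sup>2)"
      using ig by simp
    fix x
    have "Z x * max (W u x) 0 + v * (r x * max (W u x) 0) = W v x * max (W u x) 0" by (simp add: W_def algebra_simps)
    also have "\<dots> \<le> max (W v x) 0 * max (W u x) 0" by (intro mult_right_mono) auto
    also have "\<dots> \<le> (b / (2 * a)) * (max (W v x) 0)\<^sup>2 + (a / (2 * b)) * (max (W u x) 0)\<^sup>2" by (rule amgm[OF a b])
    finally show "Z x * max (W u x) 0 + v * (r x * max (W u x) 0) \<le> (b / (2 * a)) * (max (W v x) 0)\<^sup>2 + (a / (2 * b)) * (max (W u x) 0)\<^sup>2" .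
  qed
  also have "\<dots> = (b / (2 * a)) * g v + (a / (2 * b)) * g u" unfolding g_def using ig by simp
  also have "\<dots> = (b / (2 * a)) * a\<^sup>2 + (a / (2 * b)) * b\<^sup>2"
    using g_pos assms by (simp add: a_def b_def less_imp_le)
  also have "\<dots> = a * b" using a b by (simp add: field_simps power2_eq_square)
  finally show ?thesis by (simp add: a_def b_def)
qed

lemma g_cont: "continuous_on {0..b} g"
  unfolding g_def[abs_def]
proof (rule cont_int[where w="\<lambda>x. (2 + 2 * b\<^sup>2) * B x"])
  show "continuous_on {0..b} (\<lambda>t. (max (W t x) 0)\<^sup>2)" for x
    unfolding W_def by (intro continuous_intros)
  fix t x assume t: "t \<in> {0..b}"
  have "\<bar>(max (W t x) 0)\<^sup>2\<bar> \<le> (2 + 2 * t\<^sup>2) * B x" using bnd3 by (simp add: W_def B_def)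
  also have "\<dots> \<le> (2 + 2 * b\<^sup>2) * B x"
    using t B_ge1[of x] by (intro mult_right_mono) (auto intro!: power_mono)
  finally show "\<bar>(max (W t x) 0)\<^sup>2\<bar> \<le> (2 + 2 * b\<^sup>2) * B x" .
qed (use iB in auto)

lemma Nn_cont: "continuous_on {0..b} Nn"
  unfolding Nn_def[abs_def]
proof (rule cont_int[where w="\<lambda>x. (1 + \<bar>b\<bar>) * B x"])
  show "continuous_on {0..b} (\<lambda>t. r x * max (W t x) 0)" for x
    unfolding W_def by (intro continuous_intros)
  fix t x assume t: "t \<in> {0..b}"
  have "\<bar>r x * max (W t x) 0\<bar> \<le> (1 + \<bar>t\<bar>) * B x" using bnd2 by (simp add: W_def B_def)
  also have "\<dots> \<le> (1 + \<bar>b\<bar>) * B x"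
    using t B_ge1[of x] by (intro mult_right_mono) auto
  finally show "\<bar>r x * max (W t x) 0\<bar> \<le> (1 + \<bar>b\<bar>) * B x" .
qed (use iB in auto)

definition D :: "real \<Rightarrow> real" where "D u = sqrt (g u)"
definition psi :: "real \<Rightarrow> real \<Rightarrow> real" where "psi \<rho> u = D u + \<rho> * hh u / D u"

lemma D_pos: "0 \<le> u \<Longrightarrow> D u > 0" unfolding D_def using g_pos by simp

lemma psi_cont: "continuous_on {0..b} (psi \<rho>)"
proof -
  have e: "psi \<rho> u = sqrt (g u) + \<rho> * (g u - u * Nn u) / sqrt (g u)" for u
    unfolding psi_def D_def using gdecomp[of u] by simp
  have gp: "\<forall>x\<in>{0..b}. g x \<noteq> 0" using g_pos by fastforce
  show ?thesis unfolding e[abs_def]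
    using g_cont[of b] Nn_cont[of b] gp
    by (intro continuous_intros) (auto simp: less_imp_le)
qed

lemma psi_mono:
  assumes "0 \<le> u1" "u1 < u2" "-1 \<le> \<rho>" "\<rho> \<le> 1"
  shows "psi \<rho> u1 < psi \<rho> u2"
  unfolding psi_def
proof (rule alg_mono[where Na="Nn u1" and Nb="Nn u2" and ua=u1 and ub=u2])
  have u2: "0 \<le> u2" using assms by simp
  show "D u1 > 0" "D u2 > 0" using D_pos assms u2 by auto
  show "(D u1)\<^sup>2 = hh u1 + u1 * Nn u1" "(D u2)\<^sup>2 = hh u2 + u2 * Nn u2"
    unfolding D_def using gdecomp g_pos assms u2 by (auto simp: less_imp_le)
  show "hh u1 + u2 * Nn u1 \<le> D u2 * D u1" "hh u2 + u1 * Nn u2 \<le> D u1 * D u2"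
    unfolding D_def using CS assms u2 by auto
  show "hh u1 \<le> hh u2" using hh_mono assms by simp
  show "0 \<le> hh u1" unfolding hh_def by simp
  show "Nn u1 > 0" using Nn_pos assms by simp
qed (use assms in auto)

lemma int_sigma:
  assumes "\<sigma> > 0"
  shows "(\<integral>x. (max (\<sigma> * Z x + r x) 0)\<^sup>2 \<partial>M) = \<sigma>\<^sup>2 * g (1 / \<sigma>)"
proof -
  have "(max (\<sigma> * Z x + r x) 0)\<^sup>2 = \<sigma>\<^sup>2 * (max (W (1 / \<sigma>) x) 0)\<^sup>2" for x
  proof -
    have "\<sigma> * Z x + r x = \<sigma> * W (1 / \<sigma>) x" using assms by (simp add: W_def field_simps)
    then have "max (\<sigma> * Z x + r x) 0 = \<sigma> * max (W (1 / \<sigma>) x) 0"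
      using assms by (simp add: max_def mult_le_0_iff zero_le_mult_iff)
    then show ?thesis by (simp add: power_mult_distrib)
  qed
  then show ?thesis unfolding g_def by simp
qed

lemma set_sigma:
  assumes "\<sigma> > 0"
  shows "measure M {x \<in> space M. \<sigma> * Z x + r x > 0} = hh (1 / \<sigma>)"
proof -
  have "\<sigma> * Z x + r x > 0 \<longleftrightarrow> W (1 / \<sigma>) x > 0" for x
  proof -
    have "\<sigma> * Z x + r x = \<sigma> * W (1 / \<sigma>) x" using assms by (simp add: W_def field_simps)
    then show ?thesis using assms by (simp add: zero_less_mult_iff)
  qed
  then show ?thesis unfolding hh_def by simp
qed

lemma main:
  assumes r1: "-1 \<le> \<rho>" and r2: "\<rho> \<le> 1" and k: "\<kappa> > (1 + \<rho>) / sqrt 2"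
  shows "\<exists>!t :: real \<times> real \<times> real. (case t of (\<delta>, \<sigma>, \<gamma>) \<Rightarrow>
            \<delta> > 1 / sqrt 2 \<and> \<sigma> > 0 \<and> 0 < \<gamma> \<and> \<gamma> < 1 \<and>
            \<kappa> = \<delta> + \<rho> * \<gamma> / \<delta> \<and>
            \<sigma>\<^sup>2 = (1 / \<delta>\<^sup>2) * (\<integral>x. (max (\<sigma> * Z x + r x) 0)\<^sup>2 \<partial>M) \<and>
            \<gamma> = measure M {x \<in> space M. \<sigma> * Z x + r x > 0})"
proof -
  have s2: "sqrt (1 / 2) = 1 / sqrt (2::real)" by (simp add: real_sqrt_divide)
  have D0: "D 0 = 1 / sqrt 2" unfolding D_def g0 by (rule s2)
  have psi0: "psi \<rho> 0 = (1 + \<rho>) / sqrt 2"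
    unfolding psi_def D0 h0 by (simp add: field_simps)
  have kpos: "\<kappa> > 0" using k r1 by (smt (verit) divide_nonneg_pos real_sqrt_gt_zero)
  define U where "U = (\<kappa> + 2)\<^sup>2 / Nn 0"
  have U: "U > 0" using Nn0_pos kpos by (simp add: U_def)
  have psiU: "psi \<rho> U \<ge> \<kappa>"
  proof -
    have "g U \<ge> U * Nn 0" using g_ge[of U] U by simp
    also have "U * Nn 0 = (\<kappa> + 2)\<^sup>2" using Nn0_pos by (simp add: U_def)
    finally have "sqrt ((\<kappa> + 2)\<^sup>2) \<le> D U" unfolding D_def by (rule real_sqrt_le_mono)
    then have DU: "\<kappa> + 2 \<le> D U" using kpos by simp
    have "\<bar>\<rho> * hh U / D U\<bar> \<le> 1 / D U"
    proof -
      have "\<bar>\<rho> * hh U\<bar> \<le> 1"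
        using r1 r2 hh_lt1[of U] unfolding abs_mult by (intro mult_le_one) (auto simp: hh_def)
      then show ?thesis using D_pos[of U] U by (simp add: divide_right_mono)
    qed
    moreover have "1 / D U \<le> 1" using DU kpos by simp
    ultimately show ?thesis using DU unfolding psi_def by linarith
  qed
  obtain u where u0: "0 \<le> u" and uU: "u \<le> U" and pu: "psi \<rho> u = \<kappa>"
    using IVT'[of "psi \<rho>" 0 \<kappa> U] psi0 k psiU U psi_cont[of U \<rho>] by auto
  have upos: "u > 0" using u0 pu psi0 k by (cases "u = 0") auto
  let ?P = "\<lambda>t :: real \<times> real \<times> real. (case t of (\<delta>, \<sigma>, \<gamma>) \<Rightarrow>
            \<delta> > 1 / sqrt 2 \<and> \<sigma> > 0 \<and> 0 < \<gamma> \<and> \<gamma> < 1 \<and>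
            \<kappa> = \<delta> + \<rho> * \<gamma> / \<delta> \<and>
            \<sigma>\<^sup>2 = (1 / \<delta>\<^sup>2) * (\<integral>x. (max (\<sigma> * Z x + r x) 0)\<^sup>2 \<partial>M) \<and>
            \<gamma> = measure M {x \<in> space M. \<sigma> * Z x + r x > 0})"
  have Dgt: "D v > 1 / sqrt 2" if "v > 0" for v
  proof -
    have "g v > 1 / 2" using g_ge[of v] Nn0_pos that by (smt (verit) mult_pos_pos)
    then have "sqrt (1 / 2) < D v" unfolding D_def by (rule real_sqrt_less_mono)
    then show ?thesis using s2 by simp
  qed
  have hpos: "hh v > 0" if "v \<ge> 0" for v using hh_mono[of 0 v] h0 that by simp
  have Dsq: "(D v)\<^sup>2 = g v" if "v \<ge> 0" for v unfolding D_def using g_pos[OF that] by simp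
  show ?thesis
  proof (rule ex1I[of ?P "(D u, 1 / u, hh u)"])
    have "(1 / u)\<^sup>2 = (1 / (D u)\<^sup>2) * ((1 / u)\<^sup>2 * g u)"
      using Dsq[of u] g_pos[of u] u0 by simp
    then show "?P (D u, 1 / u, hh u)"
      using Dgt[OF upos] upos hpos[OF u0] hh_lt1[of u] pu int_sigma[of "1 / u"] set_sigma[of "1 / u"]
      by (simp add: psi_def)
  next
    fix t assume Pt: "?P t"
    obtain \<delta> \<sigma> \<gamma> where t: "t = (\<delta>, \<sigma>, \<gamma>)" by (cases t) auto
    have d: "\<delta> > 1 / sqrt 2" and s: "\<sigma> > 0" and kk: "\<kappa> = \<delta> + \<rho> * \<gamma> / \<delta>"
      and sq: "\<sigma>\<^sup>2 = (1 / \<delta>\<^sup>2) * (\<integral>x. (max (\<sigma> * Z x + r x) 0)\<^sup>2 \<partial>M)"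
      and gg: "\<gamma> = measure M {x \<in> space M. \<sigma> * Z x + r x > 0}" using Pt t by auto
    define v where "v = 1 / \<sigma>"
    have v: "v > 0" using s by (simp add: v_def)
    have dpos: "\<delta> > 0" using d by (smt (verit) divide_pos_pos real_sqrt_gt_zero)
    have "\<sigma>\<^sup>2 = (1 / \<delta>\<^sup>2) * (\<sigma>\<^sup>2 * g v)" using sq int_sigma[OF s] by (simp add: v_def)
    then have "\<delta>\<^sup>2 = g v" using s dpos by (simp add: field_simps)
    then have dv: "\<delta> = D v" unfolding D_def using dpos real_sqrt_unique[of \<delta> "g v"] by simp
    have gv: "\<gamma> = hh v" using gg set_sigma[OF s] by (simp add: v_def)
    have pv: "psi \<rho> v = \<kappa>" using kk dv gv by (simp add: psi_def)
    have "v = u"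
    proof (rule ccontr)
      assume "v \<noteq> u"
      then have "v < u \<or> u < v" by auto
      then show False
        using psi_mono[of v u \<rho>] psi_mono[of u v \<rho>] v u0 r1 r2 pv pu by auto
    qed
    then have "u = 1 / \<sigma>" by (simp add: v_def)
    then have "\<sigma> = 1 / u" by simp
    then show "t = (D u, 1 / u, hh u)" using t dv gv \<open>v = u\<close> by simp
  qed
qed

end

theorem lemma2:
  fixes M :: "'a measure" and Z r :: "'a \<Rightarrow> real" and \<rho> \<kappa> :: real
  assumes "prob_space M"
    and "-1 \<le> \<rho>" and "\<rho> \<le> 1"
    and "\<kappa> > (1 + \<rho>) / sqrt 2"
    and "distributed M lborel Z (\<lambda>x. ennreal (std_normal_density x))"
    and "r \<in> borel_measurable M"
    and "prob_space.indep_var M borel Z borel r"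
    and "AE x in M. r x \<ge> 0"
    and "integrable M (\<lambda>x. (r x)\<^sup>2)"
    and "distr M borel r \<noteq> return borel 0"
  shows "\<exists>!t :: real \<times> real \<times> real. (case t of (\<delta>, \<sigma>, \<gamma>) \<Rightarrow>
            \<delta> > 1 / sqrt 2 \<and> \<sigma> > 0 \<and> 0 < \<gamma> \<and> \<gamma> < 1 \<and>
            \<kappa> = \<delta> + \<rho> * \<gamma> / \<delta> \<and>
            \<sigma>\<^sup>2 = (1 / \<delta>\<^sup>2) * (\<integral>x. (max (\<sigma> * Z x + r x) 0)\<^sup>2 \<partial>M) \<and>
            \<gamma> = measure M {x \<in> space M. \<sigma> * Z x + r x > 0})"
  proof -
  interpret L M Z r
  proof (rule L.intro)
    show "prob_space M" by (rule assms(1))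
    show "L_axioms M Z r"
      by (rule L_axioms.intro) (rule assms(5), rule assms(6), rule assms(7), rule assms(8), rule assms(9), rule assms(10))
  qed
  show ?thesis by (rule main) (use assms in auto)
qed

end
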